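(* Let $a_1,a_2,\dots$ be a sequence of natural numbers. Assume there are constants $B$ and $C$ such that $a_n\le Bn$ for each $n$, and such that each natural number appears at most $C$ times in the sequence. If $\alpha$ is irrational and the distribution of $\alpha a_n\bmod 1$ converges to a probability measure $\mu$ on the circle, then $\mu$ is absolutely continuous with respect to Lebesgue measure.
   Context: "The distribution of $\alpha a_n\bmod 1$ converges to $\mu$" means that $\frac1N\sum_{n=1}^N\delta_{\alpha a_n\bmod 1}$ converges weakly to $\mu$ on $\mathbb{R}/\mathbb{Z}$. *)

theory Defs
  imports "HOL-Probability.Probability"
begin

text \<open>The circle R/Z is modelled by the fundamental domain [0,1) inside the real line:
  a probability measure on the circle is a Borel probability measure on the reals
  concentrated on [0,1); x mod 1 is frac x.  Continuous functions on R/Z are exactly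
  the continuous 1-periodic functions on R.\<close>

definition circle_prob_measure :: "real measure \<Rightarrow> bool" where
  "circle_prob_measure \<mu> \<longleftrightarrow>
     prob_space \<mu> \<and> sets \<mu> = sets borel \<and> emeasure \<mu> {0..<1} = 1"

definition circle_distribution_converges :: "(nat \<Rightarrow> real) \<Rightarrow> real measure \<Rightarrow> bool" where
  "circle_distribution_converges x \<mu> \<longleftrightarrow>
     (\<forall>f :: real \<Rightarrow> real. continuous_on UNIV f \<longrightarrow> (\<forall>t. f (t + 1) = f t) \<longrightarrow>
        ((\<lambda>N. (\<Sum>n = 1..N. f (frac (x n))) / real N)
          \<longlonglongrightarrow> (\<integral>t. f t \<partial>\<mu>)))"

end

theory Submission
  imports Defs
begin

definition dz :: "real \<Rightarrow> real" where "dz x = \<bar>x - of_int (round x)\<bar>"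

lemma dz_le: "dz x \<le> \<bar>x - of_int k\<bar>"
  unfolding dz_def by (rule round_diff_minimal)

lemma dz_shift: "dz (x + of_int k) = dz x"
proof -
  have "dz (x + of_int k) \<le> \<bar>x + of_int k - of_int (round x + k)\<bar>" by (rule dz_le)
  also have "\<dots> = dz x" by (simp add: dz_def)
  finally have 1: "dz (x + of_int k) \<le> dz x" .
  have "dz x \<le> \<bar>x - of_int (round (x + of_int k) - k)\<bar>" by (rule dz_le)
  also have "\<dots> = dz (x + of_int k)" by (simp add: dz_def algebra_simps)
  finally show ?thesis using 1 by simp
qed

lemma dz_lip: "dz x \<le> dz y + \<bar>x - y\<bar>"
proof -
  have "dz x \<le> \<bar>x - of_int (round y)\<bar>" by (rule dz_le)
  also have "\<dots> \<le> dz y + \<bar>x - y\<bar>" by (simp add: dz_def)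
  finally show ?thesis .
qed

lemma dz_abs: "dz x \<le> \<bar>x\<bar>"
  using dz_le[of x 0] by simp

lemma dz_cont: "continuous_on UNIV dz"
proof (rule continuous_on_iff[THEN iffD2], intro ballI allI impI)
  fix x and e :: real assume "e > 0"
  show "\<exists>d>0. \<forall>x'\<in>UNIV. dist x' x < d \<longrightarrow> dist (dz x') (dz x) < e"
  proof (intro exI[of _ e] conjI ballI impI)
    fix x' assume "dist x' x < e"
    then have "\<bar>x' - x\<bar> < e" by (simp add: dist_real_def)
    moreover have "\<bar>x - x'\<bar> = \<bar>x' - x\<bar>" by (rule abs_minus_commute)
    ultimately show "dist (dz x') (dz x) < e"
      using dz_lip[of x' x] dz_lip[of x x'] unfolding dist_real_def by linarith
  qed (use \<open>e>0\<close> in auto)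
qed

lemma card_fibers:
  fixes g :: "'a \<Rightarrow> 'b"
  assumes "finite Y" "g ` A \<subseteq> Y" "\<And>y. y \<in> Y \<Longrightarrow> card {x\<in>A. g x = y} \<le> F"
  shows "card A \<le> F * card Y"
proof -
  have "A = (\<Union>y\<in>Y. {x\<in>A. g x = y})" using assms(2) by auto
  then have "card A = card (\<Union>y\<in>Y. {x\<in>A. g x = y})" by simp
  also have "\<dots> \<le> (\<Sum>y\<in>Y. card {x\<in>A. g x = y})" by (rule card_UN_le[OF assms(1)])
  also have "\<dots> \<le> (\<Sum>y\<in>Y. F)" by (rule sum_mono) (use assms(3) in auto)
  finally show ?thesis by (simp add: mult.commute)
qed

lemma card_window:
  fixes T :: "nat set" and D :: real
  assumes "finite T" "\<And>a b. a \<in> T \<Longrightarrow> b \<in> T \<Longrightarrow> real a - real b < D" "0 \<le> D"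
  shows "real (card T) \<le> D + 1"
proof (cases "T = {}")
  case True
  then show ?thesis using assms(3) by simp
next
  case False
  define m where "m = Min T"
  have mT: "m \<in> T" using False assms(1) by (simp add: m_def)
  have D0: "0 < D" using assms(2)[OF mT mT] by simp
  have "T \<subseteq> {m..m + nat \<lfloor>D\<rfloor>}"
  proof
    fix a assume "a \<in> T"
    have "m \<le> a" using \<open>a \<in> T\<close> assms(1) by (simp add: m_def)
    have "real a - real m < D" using assms(2)[OF \<open>a\<in>T\<close> mT] .
    then have "int a - int m \<le> \<lfloor>D\<rfloor>" by linarith
    then show "a \<in> {m..m + nat \<lfloor>D\<rfloor>}" using \<open>m \<le> a\<close> D0 by auto
  qed
  then have "card T \<le> card {m..m + nat \<lfloor>D\<rfloor>}" by (rule card_mono[rotated]) simp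
  then have "card T \<le> nat \<lfloor>D\<rfloor> + 1" by simp
  then show ?thesis using D0 by linarith
qed

lemma card_fibers_real:
  fixes g :: "'a \<Rightarrow> 'b"
  assumes "finite Y" "g ` A \<subseteq> Y" "\<And>y. y \<in> Y \<Longrightarrow> real (card {x\<in>A. g x = y}) \<le> F"
  shows "real (card A) \<le> F * real (card Y)"
proof -
  have "A = (\<Union>y\<in>Y. {x\<in>A. g x = y})" using assms(2) by auto
  then have "card A = card (\<Union>y\<in>Y. {x\<in>A. g x = y})" by simp
  also have "\<dots> \<le> (\<Sum>y\<in>Y. card {x\<in>A. g x = y})" by (rule card_UN_le[OF assms(1)])
  finally have "real (card A) \<le> (\<Sum>y\<in>Y. real (card {x\<in>A. g x = y}))"
    by (metis of_nat_le_iff of_nat_sum)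
  also have "\<dots> \<le> (\<Sum>y\<in>Y. F)" by (rule sum_mono) (use assms(3) in auto)
  finally show ?thesis by (simp add: mult.commute)
qed

lemma count_progression:
  fixes \<alpha> c0 w \<eta> :: real and q M :: nat and p :: int
  assumes q: "q > 0" and eta: "\<eta> = \<bar>real q * \<alpha> - of_int p\<bar>" "\<eta> > 0" and w: "w > 0"
  shows "real (card {m \<in> {..M}. dz (\<alpha> * real m - c0) < 2*w})
     \<le> (4*w/\<eta> + 1) * (real q * (2 * (\<bar>\<alpha>\<bar> * q + \<bar>c0\<bar> + real M * \<eta> / q + 2) + 1))"
proof -
  define e where "e = real q * \<alpha> - of_int p"
  have ee: "\<bar>e\<bar> = \<eta>" using eta by (simp add: e_def)
  define y where "y m = \<alpha> * real (m mod q) - c0 + real (m div q) * e" for m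
  have key: "\<alpha> * real m - c0 = y m + of_int (p * int (m div q))" for m
  proof -
    have "real m = real (m mod q) + real q * real (m div q)"
      by (metis of_nat_add of_nat_mult mod_div_mult_eq add.commute mult.commute)
    then show ?thesis by (simp add: y_def e_def algebra_simps)
  qed
  have dzy: "dz (\<alpha> * real m - c0) = dz (y m)" for m
    using key[of m] dz_shift[of "y m" "p * int (m div q)"] by simp
  define A where "A = {m \<in> {..M}. dz (\<alpha> * real m - c0) < 2*w}"
  define R where "R = \<bar>\<alpha>\<bar> * q + \<bar>c0\<bar> + real M * \<eta> / q + 1"
  define Z where "Z = nat \<lceil>R\<rceil>"
  have R0: "R \<ge> 0" using eta by (simp add: R_def)
  have ZR: "real Z \<le> R + 1" "R \<le> real Z" using R0 by (simp_all add: Z_def)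
  define g where "g m = (m mod q, round (y m))" for m
  define Y where "Y = {..<q} \<times> {- int Z..int Z}"
  have cardY: "card Y = q * (2 * Z + 1)"
    by (simp add: Y_def card_cartesian_product nat_add_distrib nat_mult_distrib)
  have img: "g ` A \<subseteq> Y"
  proof
    fix z assume "z \<in> g ` A"
    then obtain m where m: "m \<in> A" "z = g m" by auto
    have mM: "m \<le> M" using m by (simp add: A_def)
    have "real (m mod q) \<le> real q" using q by simp
    then have 1: "\<bar>\<alpha> * real (m mod q)\<bar> \<le> \<bar>\<alpha>\<bar> * q"
      by (simp add: abs_mult mult_left_mono)
    have "real (m div q) * real q \<le> real M"
      by (metis mM div_times_less_eq_dividend le_trans of_nat_le_iff of_nat_mult)
    then have "real (m div q) \<le> real M / q" using q by (simp add: field_simps)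
    then have 2: "\<bar>real (m div q) * e\<bar> \<le> real M * \<eta> / q"
    proof -
      have "\<bar>real (m div q) * e\<bar> = real (m div q) * \<eta>" by (simp add: abs_mult ee)
      also have "\<dots> \<le> real M / q * \<eta>" by (rule mult_right_mono) (use \<open>real (m div q) \<le> real M / q\<close> eta in auto)
      finally show ?thesis by simp
    qed
    have "\<bar>y m\<bar> \<le> \<bar>\<alpha>\<bar> * q + \<bar>c0\<bar> + real M * \<eta> / q"
      unfolding y_def using 1 2 by linarith
    moreover have "\<bar>y m - of_int (round (y m))\<bar> \<le> 1/2" using of_int_round_abs_le[of "y m"] by linarith
    ultimately have "\<bar>of_int (round (y m))\<bar> \<le> R" unfolding R_def by linarith
    then have "\<bar>round (y m)\<bar> \<le> int Z" using ZR by linarith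
    then show "z \<in> Y" using m q by (simp add: g_def Y_def abs_le_iff)
  qed
  have fib: "real (card {m\<in>A. g m = z}) \<le> 4*w/\<eta> + 1" if "z \<in> Y" for z
  proof -
    define S where "S = {m\<in>A. g m = z}"
    have finS: "finite S" by (simp add: S_def A_def)
    have inj: "inj_on (\<lambda>m. m div q) S"
    proof (rule inj_onI)
      fix m m' assume "m \<in> S" "m' \<in> S" "m div q = m' div q"
      moreover have "m mod q = m' mod q" using \<open>m \<in> S\<close> \<open>m' \<in> S\<close> by (auto simp: S_def g_def)
      ultimately show "m = m'" by (metis mod_div_mult_eq)
    qed
    have win: "real a - real b < 4*w/\<eta>" if ab: "a \<in> (\<lambda>m. m div q) ` S" "b \<in> (\<lambda>m. m div q) ` S" for a b
    proof -
      obtain m where m: "m \<in> S" "a = m div q" using ab by auto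
      obtain m' where m': "m' \<in> S" "b = m' div q" using ab by auto
      have same: "m mod q = m' mod q" "round (y m) = round (y m')"
        using m m' by (auto simp: S_def g_def)
      have "dz (y m) < 2*w" "dz (y m') < 2*w" using m m' dzy by (auto simp: S_def A_def)
      then have "\<bar>y m - y m'\<bar> < 4*w" unfolding dz_def using same by linarith
      moreover have "y m - y m' = (real a - real b) * e" using same m m'
        by (simp add: y_def algebra_simps)
      ultimately have "\<bar>real a - real b\<bar> * \<eta> < 4*w" by (simp add: abs_mult ee)
      then have "\<bar>real a - real b\<bar> < 4*w/\<eta>" using eta by (simp add: field_simps)
      then show ?thesis by linarith
    qed
    have "real (card ((\<lambda>m. m div q) ` S)) \<le> 4*w/\<eta> + 1"
      by (rule card_window) (use finS win w eta in auto)
    then show ?thesis using card_image[OF inj] by (simp add: S_def)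
  qed
  have "real (card A) \<le> (4*w/\<eta> + 1) * real (card Y)"
    by (rule card_fibers_real[OF _ img fib]) (simp add: Y_def)
  also have "\<dots> \<le> (4*w/\<eta> + 1) * (real q * (2 * (\<bar>\<alpha>\<bar> * q + \<bar>c0\<bar> + real M * \<eta> / q + 2) + 1))"
  proof (rule mult_left_mono)
    show "real (card Y) \<le> real q * (2 * (\<bar>\<alpha>\<bar> * q + \<bar>c0\<bar> + real M * \<eta> / q + 2) + 1)"
    proof -
      have "real (2 * Z + 1) \<le> 2 * (\<bar>\<alpha>\<bar> * q + \<bar>c0\<bar> + real M * \<eta> / q + 2) + 1"
        using ZR by (simp add: R_def)
      then show ?thesis unfolding cardY of_nat_mult by (rule mult_left_mono) simp
    qed
  qed (use w eta in auto)
  finally show ?thesis by (simp add: A_def)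
qed

lemma count_irrational:
  fixes \<alpha> c0 w :: real
  assumes irr: "\<alpha> \<notin> \<rat>" and w: "w > 0"
  shows "\<exists>K0. \<forall>M. real (card {m \<in> {..M}. dz (\<alpha> * real m - c0) < 2*w}) \<le> 10 * w * real M + K0"
proof -
  obtain N :: nat where N: "N > 0" "inverse (real N) < w"
    using real_arch_inverse w by blast
  obtain h k where hk: "0 < k" "\<bar>of_int k * \<alpha> - of_int h\<bar> < 1/N"
    using Dirichlet_approx[OF N(1), of \<alpha>] by blast
  define q where "q = nat k"
  have q: "q > 0" "real q = of_int k" using hk by (simp_all add: q_def)
  define \<eta> where "\<eta> = \<bar>real q * \<alpha> - of_int h\<bar>"
  have "\<eta> \<noteq> 0"
  proof
    assume "\<eta> = 0"
    then have "\<alpha> = of_int h / of_int k" using hk q by (simp add: \<eta>_def field_simps)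
    then show False using irr by (metis Rats_divide Rats_of_int)
  qed
  then have eta0: "\<eta> > 0" by (simp add: \<eta>_def)
  have etaw: "\<eta> < w" using hk N q by (simp add: \<eta>_def inverse_eq_divide)
  define K0 where "K0 = (4*w/\<eta> + 1) * (real q * (2 * \<bar>\<alpha>\<bar> * q + 2 * \<bar>c0\<bar> + 5))"
  show ?thesis
  proof (intro exI allI)
    fix M
    have "real (card {m \<in> {..M}. dz (\<alpha> * real m - c0) < 2*w})
      \<le> (4*w/\<eta> + 1) * (real q * (2 * (\<bar>\<alpha>\<bar> * q + \<bar>c0\<bar> + real M * \<eta> / q + 2) + 1))"
      by (rule count_progression[OF q(1) \<eta>_def eta0 w])
    also have "\<dots> = 8 * w * real M + 2 * \<eta> * real M + K0"
      using eta0 q by (simp add: K0_def field_simps)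
    also have "\<dots> \<le> 10 * w * real M + K0"
      using etaw by (simp add: mult_right_mono)
    finally show "real (card {m \<in> {..M}. dz (\<alpha> * real m - c0) < 2*w}) \<le> 10 * w * real M + K0" .
  qed
qed

lemma interval_bound:
  fixes a :: "nat \<Rightarrow> nat" and B :: real and C :: nat and \<alpha> :: real
    and \<mu> :: "real measure"
  assumes growth: "\<forall>n\<ge>1. real (a n) \<le> B * real n"
    and mult: "\<forall>m. finite {n. n \<ge> 1 \<and> a n = m} \<and> card {n. n \<ge> 1 \<and> a n = m} \<le> C"
    and irr: "\<alpha> \<notin> \<rat>"
    and mu: "circle_prob_measure \<mu>"
    and conv: "circle_distribution_converges (\<lambda>n. \<alpha> * real (a n)) \<mu>"
    and uv: "u < v"
  shows "measure \<mu> {u..v} \<le> 5 * real C * B * (v - u)"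
proof -
  have P: "prob_space \<mu>" and sets: "sets \<mu> = sets borel"
    using mu by (auto simp: circle_prob_measure_def)
  have space: "space \<mu> = UNIV" using sets_eq_imp_space_eq[OF sets] by simp
  interpret prob_space \<mu> by (rule P)
  define w where "w = (v - u) / 2"
  define c0 where "c0 = (u + v) / 2"
  have w: "w > 0" using uv by (simp add: w_def)
  define f where "f t = min 1 (max 0 (2 - dz (t - c0) / w))" for t
  have cdz: "continuous_on UNIV (\<lambda>t. dz (t - c0))"
    by (rule continuous_on_compose2[OF dz_cont]) (auto intro!: continuous_intros)
  have fc: "continuous_on UNIV f"
    unfolding f_def by (intro continuous_intros cdz) (use w in auto)
  have dzper: "dz (t + of_int k - c0) = dz (t - c0)" for t k
    using dz_shift[of "t - c0" k] by (simp add: algebra_simps)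
  have fper: "\<forall>t. f (t + 1) = f t"
    using dzper[of _ 1] by (simp add: f_def)
  have ffrac: "f (frac t) = f t" for t
    using dzper[of t "- \<lfloor>t\<rfloor>"] by (simp add: f_def frac_def)
  have lim: "(\<lambda>N. (\<Sum>n = 1..N. f (\<alpha> * real (a n))) / real N) \<longlonglongrightarrow> (\<integral>t. f t \<partial>\<mu>)"
  proof -
    have "(\<lambda>N. (\<Sum>n = 1..N. f (frac (\<alpha> * real (a n)))) / real N) \<longlonglongrightarrow> (\<integral>t. f t \<partial>\<mu>)"
      using conv fc fper unfolding circle_distribution_converges_def by blast
    then show ?thesis by (simp only: ffrac)
  qed
  obtain K0 where K0: "\<And>M. real (card {m \<in> {..M}. dz (\<alpha> * real m - c0) < 2*w}) \<le> 10 * w * real M + K0"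
    using count_irrational[OF irr w, of c0] by blast
  have B0: "B \<ge> 0" using growth[rule_format, of 1] by simp
  have bound: "(\<Sum>n = 1..N. f (\<alpha> * real (a n))) / real N \<le> 10 * real C * w * B + real C * K0 / real N"
    if N: "N \<ge> 1" for N
  proof -
    define An where "An = {n \<in> {1..N}. dz (\<alpha> * real (a n) - c0) < 2*w}"
    define M where "M = nat \<lfloor>B * real N\<rfloor>"
    define Ms where "Ms = {m \<in> {..M}. dz (\<alpha> * real m - c0) < 2*w}"
    have fle: "f t \<le> indicator {t. dz (t - c0) < 2*w} t" for t
      using w by (auto simp: f_def indicator_def field_simps)
    have "(\<Sum>n = 1..N. f (\<alpha> * real (a n))) \<le> (\<Sum>n = 1..N. indicator {n. dz (\<alpha> * real (a n) - c0) < 2*w} n)"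
      by (rule sum_mono) (use fle in \<open>auto simp: indicator_def\<close>)
    also have "\<dots> = real (card ({1..N} \<inter> {n. dz (\<alpha> * real (a n) - c0) < 2*w}))"
      unfolding indicator_def of_bool_def by (simp add: sum.If_cases)
    also have "\<dots> = real (card An)"
      by (rule arg_cong[where f="\<lambda>S. real (card S)"]) (auto simp: An_def)
    finally have s1: "(\<Sum>n = 1..N. f (\<alpha> * real (a n))) \<le> real (card An)" .
    have "card An \<le> C * card Ms"
    proof (rule card_fibers)
      show "finite Ms" by (simp add: Ms_def)
      show "a ` An \<subseteq> Ms"
      proof
        fix m assume "m \<in> a ` An"
        then obtain n where n: "n \<in> An" "m = a n" by auto
        have "real (a n) \<le> B * real n" using growth n by (auto simp: An_def)
        also have "\<dots> \<le> B * real N" using n B0 by (auto simp: An_def intro: mult_left_mono)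
        finally have "int (a n) \<le> \<lfloor>B * real N\<rfloor>" by (simp add: le_floor_iff)
        then have "a n \<le> M" by (simp add: M_def le_nat_iff)
        then show "m \<in> Ms" using n by (auto simp: Ms_def An_def)
      qed
      fix m
      have "card {x \<in> An. a x = m} \<le> card {n. n \<ge> 1 \<and> a n = m}"
        by (rule card_mono) (use mult in \<open>auto simp: An_def\<close>)
      then show "card {x \<in> An. a x = m} \<le> C" using mult by (meson order_trans)
    qed
    then have "real (card An) \<le> real C * real (card Ms)"
      by (metis of_nat_le_iff of_nat_mult)
    also have "\<dots> \<le> real C * (10 * w * real M + K0)"
      by (rule mult_left_mono) (use K0[of M] in \<open>auto simp: Ms_def\<close>)
    also have "\<dots> \<le> real C * (10 * w * (B * real N) + K0)"
    proof -
      have "real M \<le> B * real N" using B0 by (simp add: M_def)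
      then show ?thesis using w by (intro mult_left_mono add_right_mono) auto
    qed
    finally have "(\<Sum>n = 1..N. f (\<alpha> * real (a n))) \<le> real C * (10 * w * (B * real N) + K0)"
      using s1 by linarith
    then show ?thesis using N by (simp add: field_simps)
  qed
  have lim2: "(\<lambda>N. 10 * real C * w * B + real C * K0 / real N) \<longlonglongrightarrow> 10 * real C * w * B"
    using tendsto_add[OF tendsto_const lim_const_over_n[of "real C * K0"]] by simp
  have intf: "(\<integral>t. f t \<partial>\<mu>) \<le> 10 * real C * w * B"
    by (rule LIMSEQ_le[OF lim lim2]) (use bound in \<open>auto intro!: exI[of _ 1]\<close>)
  have fmeas: "f \<in> borel_measurable \<mu>"
    by (subst measurable_cong_sets[OF sets refl]) (rule borel_measurable_continuous_onI[OF fc])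
  have fint: "integrable \<mu> f"
    by (rule integrable_const_bound[where B=1]) (auto simp: f_def fmeas)
  have "measure \<mu> {u..v} = (\<integral>t. indicator {u..v} t \<partial>\<mu>)"
    by (simp add: space)
  also have "\<dots> \<le> (\<integral>t. f t \<partial>\<mu>)"
  proof (rule integral_mono[OF _ fint])
    show "integrable \<mu> (indicator {u..v} :: real \<Rightarrow> real)"
    proof (rule integrable_const_bound[where B=1])
      show "indicat_real {u..v} \<in> borel_measurable \<mu>"
        by (rule borel_measurable_indicator) (simp add: sets)
    qed auto
    fix t
    show "indicator {u..v} t \<le> f t"
    proof (cases "t \<in> {u..v}")
      case True
      then have "- w \<le> t - c0" "t - c0 \<le> w" by (auto simp: c0_def w_def field_simps)
      then have "\<bar>t - c0\<bar> \<le> w" by linarith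
      then have "dz (t - c0) \<le> w" using dz_abs[of "t - c0"] by linarith
      then have "dz (t - c0) / w \<le> 1" using w by simp
      then show ?thesis using True by (simp add: f_def)
    qed (simp add: f_def)
  qed
  also have "\<dots> \<le> 10 * real C * w * B" by (rule intf)
  also have "\<dots> = 5 * real C * B * (v - u)" by (simp add: w_def)
  finally show ?thesis .
qed

lemma diff_add_cancel_half_real: "((x::real) + d/2) - (x - d/2) = d" by simp

theorem mainTheorem11:
  fixes a :: "nat \<Rightarrow> nat" and B :: real and C :: nat and \<alpha> :: real
    and \<mu> :: "real measure"
  assumes growth: "\<forall>n\<ge>1. real (a n) \<le> B * real n"
    and mult: "\<forall>m. finite {n. n \<ge> 1 \<and> a n = m} \<and> card {n. n \<ge> 1 \<and> a n = m} \<le> C"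
    and irr: "\<alpha> \<notin> \<rat>"
    and mu: "circle_prob_measure \<mu>"
    and conv: "circle_distribution_converges (\<lambda>n. \<alpha> * real (a n)) \<mu>"
  shows "absolutely_continuous lborel \<mu>"
proof -
  have P: "prob_space \<mu>" and sets: "sets \<mu> = sets borel" and one: "emeasure \<mu> {0..<1} = 1"
    using mu by (auto simp: circle_prob_measure_def)
  have space: "space \<mu> = UNIV" using sets_eq_imp_space_eq[OF sets] by simp
  interpret prob_space \<mu> by (rule P)
  define L where "L = 5 * real C * B"
  have B0: "B \<ge> 0" using growth[rule_format, of 1] by simp
  have L0: "L \<ge> 0" using B0 by (simp add: L_def)
  have ib: "measure \<mu> {u..v} \<le> L * (v - u)" if "u < v" for u v
    using interval_bound[OF growth mult irr mu conv that] by (simp add: L_def)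
  have atom: "{x} \<in> null_sets \<mu>" for x
  proof -
    have "measure \<mu> {x} \<le> 0"
    proof (rule field_le_epsilon)
      fix e :: real assume e: "e > 0"
      define d where "d = e / (L + 1)"
      have d0: "d > 0" using e L0 by (simp add: d_def)
      have "measure \<mu> {x} \<le> measure \<mu> {x - d/2 .. x + d/2}"
        by (rule finite_measure_mono) (use d0 in \<open>auto simp: sets\<close>)
      also have "\<dots> \<le> L * ((x + d/2) - (x - d/2))"
        by (rule ib) (use d0 in simp)
      also have "\<dots> = L * d" by (simp only: diff_add_cancel_half_real)
      also have "\<dots> = e * (L / (L + 1))" by (simp add: d_def)
      also have "\<dots> \<le> e * 1" by (rule mult_left_mono) (use e L0 in auto)
      finally show "measure \<mu> {x} \<le> 0 + e" by simp
    qed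
    then have "measure \<mu> {x} = 0" using measure_nonneg[of \<mu> "{x}"] by linarith
    then show ?thesis by (simp add: null_sets_def sets emeasure_eq_measure)
  qed
  show ?thesis
    unfolding absolutely_continuous_def
  proof
    fix E :: "real set" assume E: "E \<in> null_sets lborel"
    have Eb: "E \<in> sets borel" using E by (auto simp: null_sets_def)
    define S where "S = E \<inter> cbox 0 (1::real)"
    have Sn: "S \<in> null_sets lborel" unfolding S_def
      by (rule null_set_Int2[OF E]) simp
    have Sl: "S \<in> null_sets lebesgue" by (rule null_sets_completionI[OF Sn])
    have Slm: "S \<in> lmeasurable" by (rule fmeasurableI_null_sets[OF Sl])
    have S0: "measure lebesgue S = 0" using Sl by (simp add: measure_def null_setsD1)
    have compl: "emeasure \<mu> (UNIV - {0..<1}) = 0"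
    proof -
      have "measure \<mu> (space \<mu> - {0..<1}) = 1 - measure \<mu> {0..<1}"
        by (rule prob_compl) (simp add: sets)
      moreover have "measure \<mu> {0..<1} = 1" using one by (simp add: emeasure_eq_measure)
      ultimately show ?thesis by (simp add: emeasure_eq_measure space)
    qed
    have Ssub: "S \<subseteq> cbox 0 1" by (simp add: S_def)
    have bnd: "emeasure \<mu> E \<le> ennreal (L * e)" if e: "e > 0" for e
    proof -
      obtain \<D> where D: "countable \<D>"
        "\<And>K. K \<in> \<D> \<Longrightarrow> K \<subseteq> cbox 0 1 \<and> K \<noteq> {} \<and> (\<exists>c d. K = cbox c d)"
        "pairwise (\<lambda>A B. interior A \<inter> interior B = {}) \<D>"
        "\<And>u v. cbox u v \<in> \<D> \<Longrightarrow> \<exists>n. \<forall>i \<in> Basis. v \<bullet> i - u \<bullet> i = ((1::real) \<bullet> i - 0 \<bullet> i)/2^n"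
        "\<And>K. \<lbrakk>K \<in> \<D>; box 0 (1::real) \<noteq> {}\<rbrakk> \<Longrightarrow> interior K \<noteq> {}"
        "S \<subseteq> \<Union>\<D>" "\<Union>\<D> \<in> lmeasurable" "measure lebesgue (\<Union>\<D>) \<le> measure lebesgue S + e"
        by (rule measurable_outer_intervals_bounded[OF Slm Ssub e]) (rule that; assumption)
      have Kform: "\<exists>c d. c < d \<and> K = {c..d}" if KD: "K \<in> \<D>" for K
      proof -
        obtain c d where cd: "K = cbox c d" using D(2)[OF KD] by blast
        have "interior K \<noteq> {}" using D(5)[OF KD] by simp
        then have "c < d" using cd by auto
        then show ?thesis using cd by auto
      qed
      have Kb: "K \<in> sets borel" if "K \<in> \<D>" for K
        using Kform[OF that] by auto
      have Ub: "\<Union>\<D> \<in> sets borel"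
        by (rule sets.countable_Union[OF D(1)]) (use Kb in auto)
      have bd: "(\<Union>K\<in>\<D>. K - interior K) \<in> null_sets \<mu>"
      proof (rule null_sets_UN'[OF D(1)])
        fix K assume K: "K \<in> \<D>"
        then obtain c d where cd: "c < d" "K = {c..d}" using Kform by blast
        have "K - interior K = {c} \<union> {d}" using cd by auto
        then show "K - interior K \<in> null_sets \<mu>" using atom[of c] atom[of d] by (metis null_sets.Un)
      qed
      have disj: "disjoint_family_on interior \<D>"
        using D(3) unfolding disjoint_family_on_def pairwise_def by blast
      have Ib: "(\<Union>K\<in>\<D>. interior K) \<in> sets borel" by (rule borel_open) auto
      have Cb: "UNIV - {0..<(1::real)} \<in> sets borel" by simp
      have "emeasure \<mu> (\<Union>K\<in>\<D>. interior K) = (\<integral>\<^sup>+K. emeasure \<mu> (interior K) \<partial>count_space \<D>)"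
        by (rule emeasure_UN_countable[OF _ D(1) disj]) (simp add: sets)
      also have "\<dots> \<le> (\<integral>\<^sup>+K. ennreal L * emeasure lborel (interior K) \<partial>count_space \<D>)"
      proof (rule nn_integral_mono)
        fix K assume "K \<in> space (count_space \<D>)"
        then have K: "K \<in> \<D>" by simp
        then obtain c d where cd: "c < d" "K = {c..d}" using Kform by blast
        have "emeasure \<mu> (interior K) \<le> emeasure \<mu> {c..d}"
          by (rule emeasure_mono) (use cd in \<open>auto simp: sets\<close>)
        also have "\<dots> = ennreal (measure \<mu> {c..d})" by (simp add: emeasure_eq_measure)
        also have "\<dots> \<le> ennreal (L * (d - c))" using ib[OF cd(1)] by (simp add: ennreal_leI)
        also have "\<dots> = ennreal L * emeasure lborel (interior K)"
          using cd L0 by (simp add: ennreal_mult)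
        finally show "emeasure \<mu> (interior K) \<le> ennreal L * emeasure lborel (interior K)" .
      qed
      also have "\<dots> = ennreal L * (\<integral>\<^sup>+K. emeasure lborel (interior K) \<partial>count_space \<D>)"
        by (rule nn_integral_cmult) simp
      also have "(\<integral>\<^sup>+K. emeasure lborel (interior K) \<partial>count_space \<D>) = emeasure lborel (\<Union>K\<in>\<D>. interior K)"
        by (rule emeasure_UN_countable[symmetric, OF _ D(1) disj]) simp
      also have "emeasure lborel (\<Union>K\<in>\<D>. interior K) \<le> emeasure lborel (\<Union>\<D>)"
        by (rule emeasure_mono) (use Ub interior_subset in auto)
      also have "emeasure lborel (\<Union>\<D>) = emeasure lebesgue (\<Union>\<D>)"
        using Ub by (simp add: emeasure_completion)
      also have "\<dots> = ennreal (measure lebesgue (\<Union>\<D>))" by (rule emeasure_eq_measure2[OF D(7)])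
      also have "\<dots> \<le> ennreal e" using D(8) S0 by (simp add: ennreal_leI)
      finally have I: "emeasure \<mu> (\<Union>K\<in>\<D>. interior K) \<le> ennreal L * ennreal e"
        by (simp add: mult_left_mono)
      have "E \<subseteq> (\<Union>K\<in>\<D>. interior K) \<union> ((\<Union>K\<in>\<D>. K - interior K) \<union> (UNIV - {0..<1}))"
      proof
        fix x assume xE: "x \<in> E"
        show "x \<in> (\<Union>K\<in>\<D>. interior K) \<union> ((\<Union>K\<in>\<D>. K - interior K) \<union> (UNIV - {0..<1}))"
        proof (cases "x \<in> {0..<1}")
          case True
          then have "x \<in> S" using xE by (simp add: S_def)
          then obtain K where "K \<in> \<D>" "x \<in> K" using D(6) by blast
          then show ?thesis by blast
        qed simp
      qed
      then have "emeasure \<mu> E \<le> emeasure \<mu> ((\<Union>K\<in>\<D>. interior K) \<union> ((\<Union>K\<in>\<D>. K - interior K) \<union> (UNIV - {0..<1})))"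
        by (rule emeasure_mono) (use bd Ib Cb in \<open>auto simp: sets\<close>)
      also have "\<dots> \<le> emeasure \<mu> (\<Union>K\<in>\<D>. interior K) + emeasure \<mu> ((\<Union>K\<in>\<D>. K - interior K) \<union> (UNIV - {0..<1}))"
        by (rule emeasure_subadditive) (use bd Ib Cb in \<open>auto simp: sets\<close>)
      also have "emeasure \<mu> ((\<Union>K\<in>\<D>. K - interior K) \<union> (UNIV - {0..<1})) = 0"
      proof -
        have "UNIV - {0..<1} \<in> null_sets \<mu>" using compl by (simp add: null_sets_def sets)
        then have "(\<Union>K\<in>\<D>. K - interior K) \<union> (UNIV - {0..<1}) \<in> null_sets \<mu>"
          using bd by (intro null_sets.Un) auto
        then show ?thesis by (rule null_setsD1)
      qed
      finally show ?thesis using I L0 e by (simp add: ennreal_mult)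
    qed
    have "measure \<mu> E \<le> 0"
    proof (rule field_le_epsilon)
      fix e :: real assume e: "e > 0"
      have "ennreal (measure \<mu> E) \<le> ennreal (L * (e / (L+1)))"
        using bnd[of "e/(L+1)"] e L0 by (simp add: emeasure_eq_measure)
      then have "measure \<mu> E \<le> L * (e / (L+1))"
        using e L0 by (simp add: ennreal_le_iff)
      also have "\<dots> = e * (L / (L+1))" by simp
      also have "\<dots> \<le> e * 1" by (rule mult_left_mono) (use e L0 in auto)
      finally show "measure \<mu> E \<le> 0 + e" by simp
    qed
    then have "measure \<mu> E = 0" using measure_nonneg[of \<mu> E] by linarith
    then show "E \<in> null_sets \<mu>" using Eb by (simp add: null_sets_def sets emeasure_eq_measure)
  qed
qed

end
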